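(* If a semigroup $\langle A;\cdot\rangle$ is an inflation of a subsemigroup which is a rectangular band of periodic commutative groups, and the product of any two idempotents of $A$ is an idempotent, then $\langle A;\cdot\rangle$ is a Hamiltonian algebra.
   Context: A semigroup $\langle T;\cdot\rangle$ is a rectangular band of semigroups $T_{i\lambda}$ if $\{T_{i\lambda}\mid i\in I,\lambda\in\Lambda\}$ is a partition of $T$ into subsemigroups with $T_{i\lambda}\cdot T_{j\mu}\subseteq T_{i\mu}$ for all $i,j\in I$, $\lambda,\mu\in\Lambda$; it is a rectangular band of periodic commutative groups if each $\langle T_{i\lambda};\cdot\rangle$ is a commutative group all of whose elements have finite order. A semigroup $\langle A;\cdot\rangle$ is an inflation of a subsemigroup $\langle B;\cdot\rangle$ if there is a partition $\{X_b\mid b\in B\}$ of $A$ with $b\in X_b$ and $x\cdot y=a\cdot b$ for all $a,b\in B$, $x\in X_a$, $y\in X_b$. An idempotent is $e$ with $ee=e$. Subalgebras of a semigroup are its nonempty subsets closed under $\cdot$; an algebra is called Hamiltonian if the universe of every subalgebra is an equivalence class (block) of some congruence of the algebra. *)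

theory Defs
  imports "HOL-Algebra.Group"
begin

text \<open>A semigroup is modelled as a HOL-Algebra structure G with 'sg G' (closed, associative);
  only the carrier and the multiplication are used (the 'one' field is ignored).\<close>

definition sg :: "('a, 'b) monoid_scheme \<Rightarrow> bool" where
  "sg G \<longleftrightarrow> (\<forall>x\<in>carrier G. \<forall>y\<in>carrier G. x \<otimes>\<^bsub>G\<^esub> y \<in> carrier G) \<and>
     (\<forall>x\<in>carrier G. \<forall>y\<in>carrier G. \<forall>z\<in>carrier G.
        (x \<otimes>\<^bsub>G\<^esub> y) \<otimes>\<^bsub>G\<^esub> z = x \<otimes>\<^bsub>G\<^esub> (y \<otimes>\<^bsub>G\<^esub> z))"

definition subalg :: "('a, 'b) monoid_scheme \<Rightarrow> 'a set \<Rightarrow> bool" where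
  "subalg G S \<longleftrightarrow> S \<noteq> {} \<and> S \<subseteq> carrier G \<and> (\<forall>x\<in>S. \<forall>y\<in>S. x \<otimes>\<^bsub>G\<^esub> y \<in> S)"

definition sg_congruence :: "('a, 'b) monoid_scheme \<Rightarrow> ('a \<times> 'a) set \<Rightarrow> bool" where
  "sg_congruence G R \<longleftrightarrow> equiv (carrier G) R \<and>
     (\<forall>a b c d. (a, b) \<in> R \<longrightarrow> (c, d) \<in> R \<longrightarrow> (a \<otimes>\<^bsub>G\<^esub> c, b \<otimes>\<^bsub>G\<^esub> d) \<in> R)"

definition hamiltonian :: "('a, 'b) monoid_scheme \<Rightarrow> bool" where
  "hamiltonian G \<longleftrightarrow> (\<forall>S. subalg G S \<longrightarrow> (\<exists>R. sg_congruence G R \<and> S \<in> carrier G // R))"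

definition idempotent :: "('a, 'b) monoid_scheme \<Rightarrow> 'a \<Rightarrow> bool" where
  "idempotent G e \<longleftrightarrow> e \<in> carrier G \<and> e \<otimes>\<^bsub>G\<^esub> e = e"

definition periodic_comm_group_on :: "('a, 'b) monoid_scheme \<Rightarrow> 'a set \<Rightarrow> bool" where
  "periodic_comm_group_on G T \<longleftrightarrow>
     (\<exists>e. comm_group \<lparr>carrier = T, mult = mult G, one = e\<rparr> \<and>
          (\<forall>x\<in>T. \<exists>n::nat. n > 0 \<and> x [^]\<^bsub>\<lparr>carrier = T, mult = mult G, one = e\<rparr>\<^esub> n = e))"

definition rect_band_pcg ::
  "('a, 'b) monoid_scheme \<Rightarrow> 'a set \<Rightarrow> 'i set \<Rightarrow> 'l set \<Rightarrow> ('i \<Rightarrow> 'l \<Rightarrow> 'a set) \<Rightarrow> bool" where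
  "rect_band_pcg G B I L T \<longleftrightarrow>
     (\<forall>i\<in>I. \<forall>l\<in>L. subalg G (T i l) \<and> periodic_comm_group_on G (T i l)) \<and>
     (\<Union>i\<in>I. \<Union>l\<in>L. T i l) = B \<and>
     (\<forall>i\<in>I. \<forall>j\<in>I. \<forall>l\<in>L. \<forall>m\<in>L. (i, l) \<noteq> (j, m) \<longrightarrow> T i l \<inter> T j m = {}) \<and>
     (\<forall>i\<in>I. \<forall>j\<in>I. \<forall>l\<in>L. \<forall>m\<in>L. \<forall>x\<in>T i l. \<forall>y\<in>T j m. x \<otimes>\<^bsub>G\<^esub> y \<in> T i m)"

definition inflation :: "('a, 'b) monoid_scheme \<Rightarrow> 'a set \<Rightarrow> ('a \<Rightarrow> 'a set) \<Rightarrow> bool" where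
  "inflation G B X \<longleftrightarrow>
     subalg G B \<and>
     (\<forall>b\<in>B. b \<in> X b) \<and>
     (\<Union>b\<in>B. X b) = carrier G \<and>
     (\<forall>a\<in>B. \<forall>b\<in>B. a \<noteq> b \<longrightarrow> X a \<inter> X b = {}) \<and>
     (\<forall>a\<in>B. \<forall>b\<in>B. \<forall>x\<in>X a. \<forall>y\<in>X b. x \<otimes>\<^bsub>G\<^esub> y = a \<otimes>\<^bsub>G\<^esub> b)"

end

theory Submission
  imports Defs "HOL-Algebra.Coset"
begin

locale ctx =
  fixes G :: "('a, 'b) monoid_scheme"
    and B :: "'a set" and X :: "'a \<Rightarrow> 'a set"
    and I :: "'i set" and L :: "'l set" and T :: "'i \<Rightarrow> 'l \<Rightarrow> 'a set"
  assumes sgG: "sg G"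
    and inf: "inflation G B X"
    and rb: "rect_band_pcg G B I L T"
    and idm: "\<forall>e f. idempotent G e \<longrightarrow> idempotent G f \<longrightarrow> idempotent G (e \<otimes>\<^bsub>G\<^esub> f)"
begin

abbreviation mm (infixl "\<cdot>" 70) where "x \<cdot> y \<equiv> x \<otimes>\<^bsub>G\<^esub> y"

lemma sg1: "x \<in> carrier G \<Longrightarrow> y \<in> carrier G \<Longrightarrow> x \<cdot> y \<in> carrier G"
  and sg2: "x \<in> carrier G \<Longrightarrow> y \<in> carrier G \<Longrightarrow> z \<in> carrier G \<Longrightarrow> x \<cdot> y \<cdot> z = x \<cdot> (y \<cdot> z)"
  using sgG[unfolded sg_def] by (simp_all)

lemmas cl = sg1
lemmas as = sg2

lemmas infp = inf[unfolded inflation_def]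
lemmas inf_parts = infp[THEN conjunct1] infp[THEN conjunct2, THEN conjunct1]
  infp[THEN conjunct2, THEN conjunct2, THEN conjunct1]
  infp[THEN conjunct2, THEN conjunct2, THEN conjunct2, THEN conjunct1]
  infp[THEN conjunct2, THEN conjunct2, THEN conjunct2, THEN conjunct2]

lemmas rbp = rb[unfolded rect_band_pcg_def]
lemmas rb_parts = rbp[THEN conjunct1] rbp[THEN conjunct2, THEN conjunct1]
  rbp[THEN conjunct2, THEN conjunct2, THEN conjunct1]
  rbp[THEN conjunct2, THEN conjunct2, THEN conjunct2]

lemma B_sub: "B \<subseteq> carrier G" using inf_parts(1) unfolding subalg_def by simp
lemma B_cl: "x \<in> B \<Longrightarrow> y \<in> B \<Longrightarrow> x \<cdot> y \<in> B" using inf_parts(1) unfolding subalg_def by simp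

lemma T_sub: "i \<in> I \<Longrightarrow> l \<in> L \<Longrightarrow> T i l \<subseteq> B" using rb_parts(2) by auto
lemma T_mult: "i \<in> I \<Longrightarrow> j \<in> I \<Longrightarrow> l \<in> L \<Longrightarrow> m \<in> L \<Longrightarrow> x \<in> T i l \<Longrightarrow> y \<in> T j m \<Longrightarrow> x \<cdot> y \<in> T i m"
  by (rule rb_parts(4)[rule_format])
lemma T_disj: "i \<in> I \<Longrightarrow> j \<in> I \<Longrightarrow> l \<in> L \<Longrightarrow> m \<in> L \<Longrightarrow> x \<in> T i l \<Longrightarrow> x \<in> T j m \<Longrightarrow> i = j \<and> l = m"
  using rb_parts(3)[rule_format, of i j l m] by auto
lemma B_cover: "b \<in> B \<Longrightarrow> \<exists>p. p \<in> I \<times> L \<and> b \<in> T (fst p) (snd p)"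
  using rb_parts(2) by auto

definition "ix b = fst (SOME p. p \<in> I \<times> L \<and> b \<in> T (fst p) (snd p))"
definition "lx b = snd (SOME p. p \<in> I \<times> L \<and> b \<in> T (fst p) (snd p))"

lemma ixlx: "b \<in> B \<Longrightarrow> ix b \<in> I \<and> lx b \<in> L \<and> b \<in> T (ix b) (lx b)"
proof -
  assume "b \<in> B"
  from someI_ex[OF B_cover[OF this]] show ?thesis unfolding ix_def lx_def by (simp add: mem_Times_iff)
qed

lemma ixlx_uniq: "b \<in> T i l \<Longrightarrow> i \<in> I \<Longrightarrow> l \<in> L \<Longrightarrow> ix b = i \<and> lx b = l"
proof -
  assume a: "b \<in> T i l" "i \<in> I" "l \<in> L"
  then have "b \<in> B" using T_sub by blast
  then show ?thesis using ixlx T_disj a by metis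
qed

definition "HH i l e = \<lparr>carrier = T i l, mult = mult G, one = e\<rparr>"
definition "E i l = (SOME e. comm_group (HH i l e) \<and> (\<forall>x\<in>T i l. \<exists>n::nat. n > 0 \<and> x [^]\<^bsub>HH i l e\<^esub> n = e))"

lemma E_props: "i \<in> I \<Longrightarrow> l \<in> L \<Longrightarrow> comm_group (HH i l (E i l)) \<and> (\<forall>x\<in>T i l. \<exists>n::nat. n > 0 \<and> x [^]\<^bsub>HH i l (E i l)\<^esub> n = E i l)"
proof -
  assume a: "i \<in> I" "l \<in> L"
  have "periodic_comm_group_on G (T i l)" using rb_parts(1) a by simp
  then have "\<exists>e. comm_group (HH i l e) \<and> (\<forall>x\<in>T i l. \<exists>n::nat. n > 0 \<and> x [^]\<^bsub>HH i l e\<^esub> n = e)"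
    unfolding periodic_comm_group_on_def HH_def by blast
  then show ?thesis unfolding E_def by (rule someI_ex)
qed

lemma grp: "i \<in> I \<Longrightarrow> l \<in> L \<Longrightarrow> comm_group (HH i l (E i l))" using E_props by blast

lemma E_in: "i \<in> I \<Longrightarrow> l \<in> L \<Longrightarrow> E i l \<in> T i l"
proof -
  assume a: "i \<in> I" "l \<in> L"
  interpret g: comm_group "HH i l (E i l)" using grp[OF a] .
  have "\<one>\<^bsub>HH i l (E i l)\<^esub> \<in> carrier (HH i l (E i l))" by (rule g.one_closed)
  then show ?thesis by (simp add: HH_def)
qed


lemma HH_simps[simp]: "carrier (HH i l e) = T i l" "mult (HH i l e) = mult G" "one (HH i l e) = e"
  by (simp_all add: HH_def)

lemma B_car: "b \<in> B \<Longrightarrow> b \<in> carrier G" using B_sub by blast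
lemma T_car: "i \<in> I \<Longrightarrow> l \<in> L \<Longrightarrow> x \<in> T i l \<Longrightarrow> x \<in> carrier G" using T_sub B_sub by blast

lemma E_l: "i \<in> I \<Longrightarrow> l \<in> L \<Longrightarrow> x \<in> T i l \<Longrightarrow> E i l \<cdot> x = x"
proof -
  assume a: "i \<in> I" "l \<in> L" "x \<in> T i l"
  interpret g: comm_group "HH i l (E i l)" using grp a by blast
  show ?thesis using g.l_one[of x] a by simp
qed

lemma E_r: "i \<in> I \<Longrightarrow> l \<in> L \<Longrightarrow> x \<in> T i l \<Longrightarrow> x \<cdot> E i l = x"
proof -
  assume a: "i \<in> I" "l \<in> L" "x \<in> T i l"
  interpret g: comm_group "HH i l (E i l)" using grp a by blast
  show ?thesis using g.r_one[of x] a by simp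
qed

lemma idem_unique: "i \<in> I \<Longrightarrow> l \<in> L \<Longrightarrow> x \<in> T i l \<Longrightarrow> x \<cdot> x = x \<Longrightarrow> x = E i l"
proof -
  assume a: "i \<in> I" "l \<in> L" "x \<in> T i l" "x \<cdot> x = x"
  interpret g: comm_group "HH i l (E i l)" using grp a by blast
  show ?thesis using g.l_cancel_one[of x x] a by simp
qed

lemma EE: "i \<in> I \<Longrightarrow> j \<in> I \<Longrightarrow> l \<in> L \<Longrightarrow> m \<in> L \<Longrightarrow> E i l \<cdot> E j m = E i m"
proof -
  assume a: "i \<in> I" "j \<in> I" "l \<in> L" "m \<in> L"
  have "idempotent G (E i l)" "idempotent G (E j m)"
    unfolding idempotent_def using a E_in T_car E_l by auto
  then have "idempotent G (E i l \<cdot> E j m)" using idm by blast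
  moreover have "E i l \<cdot> E j m \<in> T i m" using T_mult E_in a by blast
  ultimately show ?thesis using idem_unique a unfolding idempotent_def by blast
qed

lemma Eu_r: "b \<in> B \<Longrightarrow> b \<cdot> E (ix b) (lx b) = b" using E_r ixlx by blast
lemma Eu_l: "b \<in> B \<Longrightarrow> E (ix b) (lx b) \<cdot> b = b" using E_l ixlx by blast
lemma EB: "i \<in> I \<Longrightarrow> l \<in> L \<Longrightarrow> E i l \<in> B" using E_in T_sub by blast

lemma key: "u \<in> B \<Longrightarrow> c \<in> B \<Longrightarrow> j \<in> I \<Longrightarrow> m \<in> L \<Longrightarrow> u \<cdot> E j m \<cdot> c = u \<cdot> c"
proof -
  assume a: "u \<in> B" "c \<in> B" "j \<in> I" "m \<in> L"
  note ia = ixlx[OF a(1)] and ic = ixlx[OF a(2)]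
  have cs: "u \<in> carrier G" "c \<in> carrier G" "E j m \<in> carrier G"
    "E (ix u) (lx u) \<in> carrier G" "E (ix c) (lx c) \<in> carrier G"
    using a B_car EB ia ic by auto
  have "u \<cdot> E j m \<cdot> c = (u \<cdot> E (ix u) (lx u)) \<cdot> E j m \<cdot> (E (ix c) (lx c) \<cdot> c)"
    using Eu_l Eu_r a by simp
  also have "\<dots> = u \<cdot> (E (ix u) (lx u) \<cdot> E j m \<cdot> E (ix c) (lx c)) \<cdot> c"
    using cs by (simp add: as cl)
  also have "\<dots> = u \<cdot> E (ix u) (lx c) \<cdot> c" using EE ia ic a by simp
  also have "\<dots> = u \<cdot> (E (ix u) (lx u) \<cdot> E (ix c) (lx c)) \<cdot> c" using EE ia ic a by simp
  also have "\<dots> = (u \<cdot> E (ix u) (lx u)) \<cdot> (E (ix c) (lx c) \<cdot> c)"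
    using cs by (simp add: as cl)
  also have "\<dots> = u \<cdot> c" using Eu_l Eu_r a by simp
  finally show ?thesis .
qed

lemma ix_mult: "u \<in> B \<Longrightarrow> c \<in> B \<Longrightarrow> ix (u \<cdot> c) = ix u \<and> lx (u \<cdot> c) = lx c"
proof -
  assume a: "u \<in> B" "c \<in> B"
  note ia = ixlx[OF a(1)] and ic = ixlx[OF a(2)]
  have "u \<cdot> c \<in> T (ix u) (lx c)" using T_mult ia ic by blast
  then show ?thesis using ixlx_uniq ia ic by blast
qed


definition "pi x = (SOME b. b \<in> B \<and> x \<in> X b)"

lemma pi_props: "x \<in> carrier G \<Longrightarrow> pi x \<in> B \<and> x \<in> X (pi x)"
proof -
  assume "x \<in> carrier G"
  then have "\<exists>b. b \<in> B \<and> x \<in> X b" using inf_parts(3) by blast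
  then show ?thesis unfolding pi_def by (rule someI_ex)
qed

lemma mult_pi: "x \<in> carrier G \<Longrightarrow> y \<in> carrier G \<Longrightarrow> x \<cdot> y = pi x \<cdot> pi y"
  using pi_props inf_parts(5) by blast

lemma pi_B: "b \<in> B \<Longrightarrow> pi b = b"
proof (rule ccontr)
  assume a: "b \<in> B" "pi b \<noteq> b"
  have "pi b \<in> B" "b \<in> X (pi b)" using pi_props B_car a by auto
  moreover have "b \<in> X b" using inf_parts(2) a by blast
  ultimately show False using inf_parts(4) a by blast
qed

lemma pow_Suc_closed:
  assumes Q: "\<forall>x\<in>Q. \<forall>y\<in>Q. x \<cdot> y \<in> Q" and a: "i \<in> I" "l \<in> L" "u \<in> Q" "u \<in> T i l"
  shows "u [^]\<^bsub>HH i l (E i l)\<^esub> (Suc m) \<in> Q"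
proof (induction m)
  case 0
  then show ?case using E_l a by simp
next
  case (Suc m)
  then show ?case using Q a(3) by (simp del: nat_pow_Suc add: nat_pow_Suc[of _ _ "Suc m"])
qed

lemma E_closed:
  assumes Q: "\<forall>x\<in>Q. \<forall>y\<in>Q. x \<cdot> y \<in> Q" and a: "i \<in> I" "l \<in> L" "u \<in> Q" "u \<in> T i l"
  shows "E i l \<in> Q"
proof -
  obtain n :: nat where n: "n > 0" "u [^]\<^bsub>HH i l (E i l)\<^esub> n = E i l" using E_props a by blast
  then obtain m where "n = Suc m" using gr0_conv_Suc by blast
  then show ?thesis using pow_Suc_closed[OF Q a, of m] n by simp
qed

lemma pow_closed:
  assumes Q: "\<forall>x\<in>Q. \<forall>y\<in>Q. x \<cdot> y \<in> Q" and a: "i \<in> I" "l \<in> L" "u \<in> Q" "u \<in> T i l"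
  shows "u [^]\<^bsub>HH i l (E i l)\<^esub> (m::nat) \<in> Q"
proof (cases m)
  case 0
  then show ?thesis using E_closed[OF Q a] by simp
next
  case (Suc k)
  then show ?thesis using pow_Suc_closed[OF Q a] by simp
qed

lemma F3: "w \<in> B \<Longrightarrow> j \<in> I \<Longrightarrow> m \<in> L \<Longrightarrow>
    E (ix w) (lx w) \<cdot> (E j m \<cdot> w \<cdot> E j m) \<cdot> E (ix w) (lx w) = w"
proof -
  assume a: "w \<in> B" "j \<in> I" "m \<in> L"
  note iw = ixlx[OF a(1)]
  have cs: "w \<in> carrier G" "E j m \<in> carrier G" "E (ix w) (lx w) \<in> carrier G"
    using a B_car EB iw by auto
  have "E (ix w) (lx w) \<cdot> (E j m \<cdot> w \<cdot> E j m) \<cdot> E (ix w) (lx w)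
      = (E (ix w) (lx w) \<cdot> E j m \<cdot> w) \<cdot> E j m \<cdot> E (ix w) (lx w)"
    using cs by (simp add: as cl)
  also have "\<dots> = w \<cdot> E j m \<cdot> E (ix w) (lx w)"
    using key[of "E (ix w) (lx w)" w j m] EB iw a Eu_l by simp
  also have "\<dots> = w" using key[of w "E (ix w) (lx w)" j m] EB iw a Eu_r by simp
  finally show ?thesis .
qed

end

locale ctxS = ctx +
  fixes S :: "'a set"
  assumes subS: "subalg G S"
begin

definition "SB = S \<inter> B"

lemma S_car: "S \<subseteq> carrier G" using subS unfolding subalg_def by blast
lemma S_cl: "x \<in> S \<Longrightarrow> y \<in> S \<Longrightarrow> x \<cdot> y \<in> S" using subS unfolding subalg_def by blast
lemma SB_cl: "\<forall>x\<in>SB. \<forall>y\<in>SB. x \<cdot> y \<in> SB" using S_cl B_cl unfolding SB_def by blast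

lemma SB_ne: "SB \<noteq> {}"
proof -
  obtain s where s: "s \<in> S" using subS unfolding subalg_def by blast
  then have "s \<in> carrier G" using S_car by blast
  then have "s \<cdot> s = pi s \<cdot> pi s" "pi s \<in> B" using mult_pi pi_props by auto
  then have "s \<cdot> s \<in> B" using B_cl by simp
  then show ?thesis using S_cl s unfolding SB_def by blast
qed

definition "s0 = (SOME s. s \<in> SB)"
lemma s0: "s0 \<in> SB" unfolding s0_def using SB_ne some_in_eq by blast
definition "i0 = ix s0"
definition "l0 = lx s0"
definition "f = E i0 l0"
definition "K = SB \<inter> T i0 l0"
definition "H0 = HH i0 l0 f"

lemma i0l0: "i0 \<in> I" "l0 \<in> L" "s0 \<in> T i0 l0"
  using ixlx s0 unfolding i0_def l0_def SB_def by auto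

lemma f_SB: "f \<in> SB" unfolding f_def using E_closed[OF SB_cl i0l0(1,2) s0 i0l0(3)] .
lemma f_T: "f \<in> T i0 l0" unfolding f_def using E_in i0l0 by blast
lemma f_car: "f \<in> carrier G" using f_T T_car i0l0 by blast
lemma ff: "f \<cdot> f = f" using E_l f_T i0l0 unfolding f_def by blast

lemma H0g: "comm_group H0" unfolding H0_def f_def using grp i0l0 by blast

lemma K_sub: "subgroup K H0"
proof -
  interpret g: comm_group H0 by (rule H0g)
  show ?thesis
  proof
    show "K \<subseteq> carrier H0" unfolding K_def H0_def by auto
    show "\<And>x y. x \<in> K \<Longrightarrow> y \<in> K \<Longrightarrow> x \<otimes>\<^bsub>H0\<^esub> y \<in> K"
      unfolding K_def H0_def using SB_cl T_mult i0l0 by auto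
    show "\<one>\<^bsub>H0\<^esub> \<in> K" unfolding K_def H0_def using f_SB f_T by auto
    fix x assume x: "x \<in> K"
    then have xs: "x \<in> SB" "x \<in> T i0 l0" unfolding K_def by auto
    obtain n :: nat where n: "n > 0" "x [^]\<^bsub>HH i0 l0 (E i0 l0)\<^esub> n = E i0 l0" using E_props i0l0 xs by blast
    then obtain m where m: "n = Suc m" using gr0_conv_Suc by blast
    have xc: "x \<in> carrier H0" using xs unfolding H0_def by simp
    have pc: "x [^]\<^bsub>H0\<^esub> m \<in> carrier H0" using g.nat_pow_closed xc by blast
    have "x [^]\<^bsub>H0\<^esub> m \<otimes>\<^bsub>H0\<^esub> x = \<one>\<^bsub>H0\<^esub>" using n m unfolding H0_def f_def by simp
    then have "inv\<^bsub>H0\<^esub> x = x [^]\<^bsub>H0\<^esub> m" using g.inv_equality xc pc by blast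
    moreover have "x [^]\<^bsub>H0\<^esub> m \<in> SB"
      using pow_closed[OF SB_cl i0l0(1,2) xs] unfolding H0_def f_def by blast
    moreover have "x [^]\<^bsub>H0\<^esub> m \<in> T i0 l0" using pc unfolding H0_def by simp
    ultimately show "inv\<^bsub>H0\<^esub> x \<in> K" unfolding K_def by simp
  qed
qed

lemma K_normal: "normal K H0"
  using comm_group.subgroup_imp_normal[OF H0g K_sub] .


definition "gp u = f \<cdot> u \<cdot> f"

lemma gp_T: "u \<in> B \<Longrightarrow> gp u \<in> T i0 l0"
proof -
  assume u: "u \<in> B"
  note iu = ixlx[OF u]
  have "f \<cdot> u \<in> T i0 (lx u)" using T_mult f_T iu i0l0 by blast
  then show ?thesis unfolding gp_def using T_mult f_T iu i0l0 by blast
qed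

lemma gp_mult: "u \<in> B \<Longrightarrow> c \<in> B \<Longrightarrow> gp (u \<cdot> c) = gp u \<cdot> gp c"
proof -
  assume a: "u \<in> B" "c \<in> B"
  have cs: "u \<in> carrier G" "c \<in> carrier G" using a B_car by auto
  have fu: "f \<cdot> u \<in> B" using B_cl a f_SB unfolding SB_def by blast
  have "gp u \<cdot> gp c = (f \<cdot> u \<cdot> (f \<cdot> f)) \<cdot> c \<cdot> f" unfolding gp_def
    using cs f_car by (simp add: as cl)
  also have "\<dots> = (f \<cdot> u) \<cdot> f \<cdot> c \<cdot> f" using ff cs f_car by (simp add: as cl)
  also have "\<dots> = (f \<cdot> u) \<cdot> c \<cdot> f" using key[OF fu a(2) i0l0(1,2)] unfolding f_def by simp
  also have "\<dots> = gp (u \<cdot> c)" unfolding gp_def using cs f_car by (simp add: as cl)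
  finally show ?thesis by simp
qed

definition "Phi u = ((if ix u \<in> ix ` SB then None else Some (ix u)),
                     (if lx u \<in> lx ` SB then None else Some (lx u)),
                     K #>\<^bsub>H0\<^esub> gp u)"

lemma Phi_mult: "u \<in> B \<Longrightarrow> v \<in> B \<Longrightarrow> c \<in> B \<Longrightarrow> d \<in> B \<Longrightarrow> Phi u = Phi v \<Longrightarrow> Phi c = Phi d
   \<Longrightarrow> Phi (u \<cdot> c) = Phi (v \<cdot> d)"
proof -
  assume a: "u \<in> B" "v \<in> B" "c \<in> B" "d \<in> B" "Phi u = Phi v" "Phi c = Phi d"
  interpret n: normal K H0 by (rule K_normal)
  have c1: "K #>\<^bsub>H0\<^esub> gp u = K #>\<^bsub>H0\<^esub> gp v" "K #>\<^bsub>H0\<^esub> gp c = K #>\<^bsub>H0\<^esub> gp d"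
    using a(5,6) unfolding Phi_def by auto
  have gc: "gp x \<in> carrier H0" if "x \<in> B" for x using gp_T that unfolding H0_def by simp
  have "K #>\<^bsub>H0\<^esub> gp (u \<cdot> c) = (K #>\<^bsub>H0\<^esub> gp u) <#>\<^bsub>H0\<^esub> (K #>\<^bsub>H0\<^esub> gp c)"
    using n.rcos_sum[OF gc[OF a(1)] gc[OF a(3)]] gp_mult a unfolding H0_def by simp
  also have "\<dots> = (K #>\<^bsub>H0\<^esub> gp v) <#>\<^bsub>H0\<^esub> (K #>\<^bsub>H0\<^esub> gp d)" using c1 by simp
  also have "\<dots> = K #>\<^bsub>H0\<^esub> gp (v \<cdot> d)"
    using n.rcos_sum[OF gc[OF a(2)] gc[OF a(4)]] gp_mult a unfolding H0_def by simp
  finally have 3: "K #>\<^bsub>H0\<^esub> gp (u \<cdot> c) = K #>\<^bsub>H0\<^esub> gp (v \<cdot> d)" .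
  have "ix (u \<cdot> c) = ix u" "ix (v \<cdot> d) = ix v" "lx (u \<cdot> c) = lx c" "lx (v \<cdot> d) = lx d"
    using ix_mult a by auto
  then show ?thesis using a(5,6) 3 unfolding Phi_def by (simp split: if_splits)
qed

lemma Phi_f: "Phi f = (None, None, K)"
proof -
  interpret g: comm_group H0 by (rule H0g)
  have "gp f = f" unfolding gp_def using ff by simp
  moreover have "f \<in> K" unfolding K_def using f_SB f_T by simp
  ultimately have "K #>\<^bsub>H0\<^esub> gp f = K" using subgroup.rcos_const[OF K_sub g.is_group] by simp
  then show ?thesis unfolding Phi_def using f_SB by auto
qed

lemma Blk: "w \<in> B \<Longrightarrow> Phi w = Phi f \<longleftrightarrow> w \<in> SB"
proof -
  assume w: "w \<in> B"
  interpret g: comm_group H0 by (rule H0g)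
  note iw = ixlx[OF w]
  have gc: "gp w \<in> carrier H0" using gp_T w unfolding H0_def by simp
  show ?thesis
  proof
    assume "Phi w = Phi f"
    then have p: "ix w \<in> ix ` SB" "lx w \<in> lx ` SB" "K #>\<^bsub>H0\<^esub> gp w = K"
      unfolding Phi_f unfolding Phi_def by (auto split: if_splits)
    then have "gp w \<in> K" using g.rcos_self[OF gc K_sub] by simp
    then have gS: "gp w \<in> SB" unfolding K_def by simp
    obtain s1 where s1: "s1 \<in> SB" "ix s1 = ix w" using p(1) by auto
    obtain s2 where s2: "s2 \<in> SB" "lx s2 = lx w" using p(2) by auto
    have s1B: "s1 \<in> B" and s2B: "s2 \<in> B" using s1 s2 unfolding SB_def by auto
    note i1 = ixlx[OF s1B] and i2 = ixlx[OF s2B]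
    have "E (ix s1) (lx s1) \<in> SB" using E_closed[OF SB_cl _ _ s1(1)] i1 by blast
    moreover have "E (ix s2) (lx s2) \<in> SB" using E_closed[OF SB_cl _ _ s2(1)] i2 by blast
    ultimately have "E (ix s1) (lx s1) \<cdot> E (ix s2) (lx s2) \<in> SB" using SB_cl by blast
    then have eS: "E (ix w) (lx w) \<in> SB" using EE i1 i2 s1 s2 by simp
    have "E (ix w) (lx w) \<cdot> gp w \<cdot> E (ix w) (lx w) \<in> SB" using eS gS SB_cl by blast
    then show "w \<in> SB" using F3[OF w i0l0(1,2)] unfolding gp_def f_def by simp
  next
    assume ws: "w \<in> SB"
    have "gp w \<in> SB" unfolding gp_def using SB_cl ws f_SB by blast
    then have "gp w \<in> K" unfolding K_def using gp_T w by simp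
    then have "K #>\<^bsub>H0\<^esub> gp w = K" using subgroup.rcos_const[OF K_sub g.is_group] by simp
    then show "Phi w = Phi f" unfolding Phi_f unfolding Phi_def using ws by auto
  qed
qed

lemma pi_S: "x \<in> S \<Longrightarrow> pi x \<in> SB"
proof -
  assume x: "x \<in> S"
  have xc: "x \<in> carrier G" using x S_car by blast
  define b where "b = pi x"
  have b: "b \<in> B" using pi_props xc unfolding b_def by blast
  note ib = ixlx[OF b]
  have fS: "f \<in> S" "f \<in> B" using f_SB unfolding SB_def by auto
  have "x \<cdot> f = b \<cdot> f" using mult_pi[OF xc f_car] pi_B[OF fS(2)] unfolding b_def by simp
  then have bf: "b \<cdot> f \<in> SB" using S_cl[OF x fS(1)] B_cl[OF b fS(2)] unfolding SB_def by simp
  have "f \<cdot> x = f \<cdot> b" using mult_pi[OF f_car xc] pi_B[OF fS(2)] unfolding b_def by simp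
  then have fb: "f \<cdot> b \<in> SB" using S_cl[OF fS(1) x] B_cl[OF fS(2) b] unfolding SB_def by simp
  have fbB: "f \<cdot> b \<in> B" using fb unfolding SB_def by simp
  have "ix (f \<cdot> b) = i0" "lx (f \<cdot> b) = lx b" using ix_mult[OF fS(2) b] f_T i0l0 ixlx_uniq by auto
  moreover have "E (ix (f \<cdot> b)) (lx (f \<cdot> b)) \<in> SB"
    using E_closed[OF SB_cl _ _ fb] ixlx[OF fbB] by blast
  ultimately have eS: "E i0 (lx b) \<in> SB" by simp
  have "(b \<cdot> f) \<cdot> E i0 (lx b) = b \<cdot> E i0 (lx b)"
    using key[OF b EB[OF i0l0(1)] i0l0(1,2)] ib unfolding f_def by simp
  also have "\<dots> = (b \<cdot> E (ix b) (lx b)) \<cdot> E i0 (lx b)" using Eu_r b by simp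
  also have "\<dots> = b \<cdot> (E (ix b) (lx b) \<cdot> E i0 (lx b))"
    using as b B_car EB ib i0l0 by simp
  also have "\<dots> = b" using EE ib i0l0 Eu_r b by simp
  finally have "b = (b \<cdot> f) \<cdot> E i0 (lx b)" by simp
  then show ?thesis unfolding b_def[symmetric] using SB_cl bf eS by metis
qed

definition "theta = {(x, y). x \<in> carrier G \<and> y \<in> carrier G \<and>
   (x = y \<or> (x \<in> S \<and> y \<in> S) \<or> (x \<in> B \<and> y \<in> B \<and> x \<notin> S \<and> y \<notin> S \<and> Phi x = Phi y))}"

lemma theta_equiv: "equiv (carrier G) theta"
  unfolding equiv_def refl_on_def sym_def trans_def theta_def using S_car by auto

lemma theta_block: "S \<in> carrier G // theta"
proof -
  have s0S: "s0 \<in> S" "s0 \<in> carrier G" using s0 S_car unfolding SB_def by auto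
  have "theta `` {s0} = S" unfolding theta_def using s0S S_car by auto
  then show ?thesis using quotientI[OF s0S(2), of theta] by simp
qed

lemma theta_Phi: "(x, y) \<in> theta \<Longrightarrow> Phi (pi x) = Phi (pi y)"
proof -
  assume "(x, y) \<in> theta"
  then have h: "x = y \<or> (x \<in> S \<and> y \<in> S) \<or> (x \<in> B \<and> y \<in> B \<and> Phi x = Phi y)"
    unfolding theta_def by auto
  show ?thesis
  proof (cases "x \<in> S \<and> y \<in> S")
    case True
    then have "pi x \<in> SB" "pi y \<in> SB" using pi_S by auto
    then have "Phi (pi x) = Phi f" "Phi (pi y) = Phi f" using Blk unfolding SB_def by auto
    then show ?thesis by simp
  next
    case False
    then show ?thesis using h pi_B by auto
  qed
qed

lemma Phi_theta: "u \<in> B \<Longrightarrow> v \<in> B \<Longrightarrow> Phi u = Phi v \<Longrightarrow> (u, v) \<in> theta"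
proof -
  assume a: "u \<in> B" "v \<in> B" "Phi u = Phi v"
  have "u \<in> S \<longleftrightarrow> v \<in> S" using Blk[OF a(1)] Blk[OF a(2)] a unfolding SB_def by auto
  then show ?thesis unfolding theta_def using a B_car by auto
qed

lemma theta_cong: "sg_congruence G theta"
  unfolding sg_congruence_def
proof (intro conjI allI impI)
  show "equiv (carrier G) theta" by (rule theta_equiv)
  fix a b c d assume ab: "(a, b) \<in> theta" and cd: "(c, d) \<in> theta"
  have cs: "a \<in> carrier G" "b \<in> carrier G" "c \<in> carrier G" "d \<in> carrier G"
    using ab cd unfolding theta_def by auto
  have pB: "pi a \<in> B" "pi b \<in> B" "pi c \<in> B" "pi d \<in> B" using pi_props cs by auto
  have e: "a \<cdot> c = pi a \<cdot> pi c" "b \<cdot> d = pi b \<cdot> pi d" using mult_pi cs by auto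
  have "Phi (pi a \<cdot> pi c) = Phi (pi b \<cdot> pi d)"
    using Phi_mult[OF pB theta_Phi[OF ab] theta_Phi[OF cd]] .
  then show "(a \<cdot> c, b \<cdot> d) \<in> theta" using Phi_theta B_cl pB e by simp
qed

lemma ham: "\<exists>R. sg_congruence G R \<and> S \<in> carrier G // R"
  using theta_cong theta_block by blast

end

theorem mainTheorem18:
  fixes G :: "('a, 'b) monoid_scheme"
    and B :: "'a set" and X :: "'a \<Rightarrow> 'a set"
    and I :: "'i set" and L :: "'l set" and T :: "'i \<Rightarrow> 'l \<Rightarrow> 'a set"
  assumes "sg G"
    and "inflation G B X"
    and "rect_band_pcg G B I L T"
    and "\<forall>e f. idempotent G e \<longrightarrow> idempotent G f \<longrightarrow> idempotent G (e \<otimes>\<^bsub>G\<^esub> f)"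
  shows "hamiltonian G"
  unfolding hamiltonian_def
proof (intro allI impI)
  fix S assume "subalg G S"
  then interpret ctxS G B X I L T S using assms by (unfold_locales) auto
  show "\<exists>R. sg_congruence G R \<and> S \<in> carrier G // R" by (rule ham)
qed

end
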